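(* Consider the multi-hop multi-channel network and Algorithm 1 described in the context, with parameter $\Delta_{est} \ge \Delta$, and assume $\delta \le \frac{1}{7}$. Let $v$ and $u$ be neighbors, let $f$ be a frame of $v$ and $g$ a frame of $u$ such that the pair $(f,g)$ is aligned. Then the probability that $(f,g)$ covers the link $v \to u$ is at least $\frac{\rho}{8\max(2S,\,3\Delta_{est})}$.
   Context: Network: a finite set of $N$ nodes; each node $u$ has a nonempty available channel set $A_u$; $S=\max_u |A_u|$. Neighborhood on a channel is a symmetric relation; all channels have identical propagation characteristics, so nodes $u,v$ are neighbors on a channel $c$ iff they are neighbors on some channel and $c\in A_u\cap A_v$. For $c\in A_u$, $\deg(u,c)$ is the number of neighbors of $u$ on $c$, and $\Delta=\max_u\max_{c\in A_u}\deg(u,c)$. For neighbors $v,u$ the link $v\to u$ has span $\mathrm{span}(v\to u)=A_u\cap A_v$ and span-ratio $|\mathrm{span}(v\to u)|/|A_u|$; $\rho$ is the minimum span-ratio over all links. A node operates on one channel at a time and cannot transmit and receive simultaneously; a node $u$ listening on channel $c$ throughout a real-time interval $I$ receives a message transmitted on $c$ during $I$ by a neighbor $v$ provided no other neighbor of $u$ on $c$ transmits on $c$ at any time during $I$; there is no collision detection. Clocks: each node $u$ has a clock $C_u$ with $(1-\delta)\Delta t \le C_u(t+\Delta t)-C_u(t)\le(1+\delta)\Delta t$ for all real $t$ and $\Delta t\ge 0$, arbitrary offsets. Algorithm 1 (input: a positive integer $\Delta_{est}$, an upper bound on $\Delta$ known to all nodes): each node starts at an arbitrary real time and partitions its local time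 into consecutive frames of local length $L$, each divided into three consecutive slots of local length $L/3$. At the start of each frame, node $u$ selects a channel $c$ uniformly at random from $A_u$, and with probability $p_u=\min\!\left(\frac12,\frac{|A_u|}{3\Delta_{est}}\right)$ is in transmit mode for that frame, otherwise in receive mode. In transmit mode it transmits on $c$, during each of the three slots of the frame, a message containing its identity and $A_u$; in receive mode it listens on $c$ during the whole frame, and for each message received from a node $v$ containing set $A$ it records $v$ as a neighbor with common channels $A\cap A_u$. All random choices are independent across frames and nodes. Definitions: a pair of frames $(f,g)$ (with $f$ a frame of $v$, $g$ a frame of $u$) is aligned if at least one slot of $f$ lies completely (in real time) within $g$. For a frame $g$ and node $w$, $\mathrm{overlap}(g,w)$ is the set of frames of $w$ overlapping $g$ in real time. The pair $(f,g)$ covers link $v\to u$ on channel $c$ if (i) $v$ transmits on $c$ during $f$, (ii) $u$ listens on $c$ during $g$, and (iii) no neighbor $w\neq v$ of $u$ on $c$ transmits on $c$ during any frame in $\mathrm{overlap}(g,w)$. The pair covers $v\to u$ if it covers it on some channel $c\in\mathrm{span}(v\to u)$. *)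

theory Defs
  imports "HOL-Probability.Probability"
begin

text \<open>Nodes form a finite type; nb is the (symmetric, irreflexive) neighbour relation
  and A u the available channel set of node u.\<close>

definition nb_on :: "('n \<Rightarrow> 'n \<Rightarrow> bool) \<Rightarrow> ('n \<Rightarrow> 'c set) \<Rightarrow> 'n \<Rightarrow> 'n \<Rightarrow> 'c \<Rightarrow> bool" where
  "nb_on nb A u w c \<longleftrightarrow> nb u w \<and> c \<in> A u \<and> c \<in> A w"

definition deg :: "('n \<Rightarrow> 'n \<Rightarrow> bool) \<Rightarrow> ('n \<Rightarrow> 'c set) \<Rightarrow> 'n \<Rightarrow> 'c \<Rightarrow> nat" where
  "deg nb A u c = card {w. nb_on nb A u w c}"

definition maxdeg :: "('n \<Rightarrow> 'n \<Rightarrow> bool) \<Rightarrow> ('n \<Rightarrow> 'c set) \<Rightarrow> nat" where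
  "maxdeg nb A = Max {deg nb A u c | u c. c \<in> A u}"

definition S_max :: "('n \<Rightarrow> 'c set) \<Rightarrow> nat" where
  "S_max A = Max (range (\<lambda>u. card (A u)))"

definition span_ratio :: "('n \<Rightarrow> 'c set) \<Rightarrow> 'n \<Rightarrow> 'n \<Rightarrow> real" where
  "span_ratio A v u = real (card (A u \<inter> A v)) / real (card (A u))"

definition rho :: "('n \<Rightarrow> 'n \<Rightarrow> bool) \<Rightarrow> ('n \<Rightarrow> 'c set) \<Rightarrow> real" where
  "rho nb A = Min {span_ratio A v u | v u. nb v u}"

definition valid_clock :: "real \<Rightarrow> (real \<Rightarrow> real) \<Rightarrow> bool" where
  "valid_clock \<delta> Cl \<longleftrightarrow> (\<forall>t dt. dt \<ge> 0 \<longrightarrow>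
       (1 - \<delta>) * dt \<le> Cl (t + dt) - Cl t \<and> Cl (t + dt) - Cl t \<le> (1 + \<delta>) * dt)"

text \<open>Node w starts at real time s w; its k-th frame
  (k = 0,1,...) covers local times [C w (s w) + k L, C w (s w) + (k+1) L); slot j (j<3)
  of that frame covers local times [C w (s w) + k L + j L/3, C w (s w) + k L + (j+1) L/3).\<close>

definition frame_time :: "('n \<Rightarrow> real \<Rightarrow> real) \<Rightarrow> ('n \<Rightarrow> real) \<Rightarrow> real \<Rightarrow> 'n \<Rightarrow> nat \<Rightarrow> real set" where
  "frame_time C s L w k =
     {t. C w (s w) + real k * L \<le> C w t \<and> C w t < C w (s w) + real (Suc k) * L}"

definition slot_time :: "('n \<Rightarrow> real \<Rightarrow> real) \<Rightarrow> ('n \<Rightarrow> real) \<Rightarrow> real \<Rightarrow> 'n \<Rightarrow> nat \<Rightarrow> nat \<Rightarrow> real set" where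
  "slot_time C s L w k j =
     {t. C w (s w) + real k * L + real j * L / 3 \<le> C w t \<and>
         C w t < C w (s w) + real k * L + real (Suc j) * L / 3}"

definition aligned :: "('n \<Rightarrow> real \<Rightarrow> real) \<Rightarrow> ('n \<Rightarrow> real) \<Rightarrow> real \<Rightarrow> 'n \<Rightarrow> nat \<Rightarrow> 'n \<Rightarrow> nat \<Rightarrow> bool" where
  "aligned C s L v f u g \<longleftrightarrow> (\<exists>j<3. slot_time C s L v f j \<subseteq> frame_time C s L u g)"

definition overlap :: "('n \<Rightarrow> real \<Rightarrow> real) \<Rightarrow> ('n \<Rightarrow> real) \<Rightarrow> real \<Rightarrow> 'n \<Rightarrow> nat \<Rightarrow> 'n \<Rightarrow> nat set" where
  "overlap C s L u g w = {k. frame_time C s L w k \<inter> frame_time C s L u g \<noteq> {}}"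

definition p_tx :: "('n \<Rightarrow> 'c set) \<Rightarrow> nat \<Rightarrow> 'n \<Rightarrow> real" where
  "p_tx A Dest w = min (1/2) (real (card (A w)) / (3 * real Dest))"

definition frame_pmf :: "('n \<Rightarrow> 'c set) \<Rightarrow> nat \<Rightarrow> 'n \<Rightarrow> (bool \<times> 'c) pmf" where
  "frame_pmf A Dest w = pair_pmf (bernoulli_pmf (p_tx A Dest w)) (pmf_of_set (A w))"

definition alg_space :: "('n \<Rightarrow> 'c set) \<Rightarrow> nat \<Rightarrow> (('n \<times> nat) \<Rightarrow> (bool \<times> 'c)) measure" where
  "alg_space A Dest = PiM UNIV (\<lambda>i. measure_pmf (frame_pmf A Dest (fst i)))"

text \<open>Coverage. omega (w,k) = (b, c): in frame k node w transmits on c if b, listens on c otherwise.\<close>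

definition covers_on ::
  "('n \<Rightarrow> 'n \<Rightarrow> bool) \<Rightarrow> ('n \<Rightarrow> 'c set) \<Rightarrow> ('n \<Rightarrow> real \<Rightarrow> real) \<Rightarrow> ('n \<Rightarrow> real) \<Rightarrow> real \<Rightarrow>
   (('n \<times> nat) \<Rightarrow> (bool \<times> 'c)) \<Rightarrow> 'n \<Rightarrow> nat \<Rightarrow> 'n \<Rightarrow> nat \<Rightarrow> 'c \<Rightarrow> bool" where
  "covers_on nb A C s L \<omega> v f u g c \<longleftrightarrow>
     \<omega> (v, f) = (True, c) \<and> \<omega> (u, g) = (False, c) \<and>
     (\<forall>w. w \<noteq> v \<and> nb_on nb A u w c \<longrightarrow>
        (\<forall>k \<in> overlap C s L u g w. \<omega> (w, k) \<noteq> (True, c)))"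

definition covers ::
  "('n \<Rightarrow> 'n \<Rightarrow> bool) \<Rightarrow> ('n \<Rightarrow> 'c set) \<Rightarrow> ('n \<Rightarrow> real \<Rightarrow> real) \<Rightarrow> ('n \<Rightarrow> real) \<Rightarrow> real \<Rightarrow>
   (('n \<times> nat) \<Rightarrow> (bool \<times> 'c)) \<Rightarrow> 'n \<Rightarrow> nat \<Rightarrow> 'n \<Rightarrow> nat \<Rightarrow> bool" where
  "covers nb A C s L \<omega> v f u g \<longleftrightarrow> (\<exists>c \<in> A u \<inter> A v. covers_on nb A C s L \<omega> v f u g c)"

end

theory Submission
  imports Defs
begin


lemma quarter_bound:
  fixes D :: nat assumes "D > 0"
  shows "(1 - 1/(3*real D)) ^ (3*(D-1)) \<ge> 1/4"
proof -
  define m where "m = 3*real D - 1"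
  have m2: "m \<ge> 2" using assms unfolding m_def by (simp add: Suc_le_eq[symmetric]) 
  have q: "1 - 1/(3*real D) = 1/(1 + 1/m)" unfolding m_def using assms
    by (simp add: field_simps)
  have e: "1 + 1/m \<le> exp (1/m)" by (rule exp_ge_add_one_self)
  have pos: "0 < 1 + 1/m" using m2 by (simp add: add_pos_pos)
  have "inverse (exp (1/m)) \<le> inverse (1 + 1/m)" by (rule le_imp_inverse_le[OF e pos])
  hence "exp (-(1/m)) \<le> 1 - 1/(3*real D)" unfolding q by (simp add: exp_minus inverse_eq_divide)
  hence "exp (-(1/m)) ^ (3*(D-1)) \<le> (1 - 1/(3*real D)) ^ (3*(D-1))"
    by (intro power_mono) auto
  moreover have "exp (-(1/m)) ^ (3*(D-1)) = exp (- (real (3*(D-1)) / m))"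
    by (simp add: exp_of_nat_mult[symmetric])
  moreover have "real (3*(D-1)) / m \<le> 1" using assms m2 unfolding m_def
    by (simp add: of_nat_diff field_simps)
  hence "exp (-1) \<le> exp (- (real (3*(D-1)) / m))" by simp
  moreover have "exp (-1::real) \<ge> 1/4"
    using exp_le by (simp add: exp_minus field_simps)
  ultimately show ?thesis by linarith
qed



lemma clock_mono:
  assumes "valid_clock \<delta> Cl" "\<delta> < 1" "t1 \<le> t2"
  shows "(1-\<delta>)*(t2-t1) \<le> Cl t2 - Cl t1" "Cl t2 - Cl t1 \<le> (1+\<delta>)*(t2-t1)"
  using assms(1)[unfolded valid_clock_def, rule_format, of "t2-t1" t1] assms(3) by auto

lemma overlap_close:
  assumes cw: "valid_clock \<delta> (C w)" and cu: "valid_clock \<delta> (C u)"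
    and d: "\<delta> \<le> 1/7" "0 \<le> \<delta>" and L: "L > 0"
    and k1: "k1 \<in> overlap C s L u g w" and k2: "k2 \<in> overlap C s L u g w"
  shows "k2 \<le> k1 + 2"
proof (rule ccontr)
  assume "\<not> k2 \<le> k1 + 2"
  hence kk: "real k2 \<ge> real k1 + 3" by simp
  obtain t1 where t1: "t1 \<in> frame_time C s L w k1" "t1 \<in> frame_time C s L u g"
    using k1 unfolding overlap_def by auto
  obtain t2 where t2: "t2 \<in> frame_time C s L w k2" "t2 \<in> frame_time C s L u g"
    using k2 unfolding overlap_def by auto
  have w1: "C w t1 < C w (s w) + (real k1 + 1) * L" and w2: "C w (s w) + real k2 * L \<le> C w t2"
    using t1(1) t2(1) unfolding frame_time_def by (auto simp: add.commute)
  have "(real k1 + 3) * L \<le> real k2 * L" using kk L by (intro mult_right_mono) auto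
  hence wd: "C w t2 - C w t1 > 2 * L" using w1 w2 by (simp add: algebra_simps)
  have ud: "C u t2 - C u t1 < L" using t1(2) t2(2) unfolding frame_time_def by (auto simp: algebra_simps)
  show False
  proof (cases "t1 \<le> t2")
    case True
    have a: "C w t2 - C w t1 \<le> (1+\<delta>)*(t2-t1)" using clock_mono[OF cw _ True] d by auto
    have b: "(1-\<delta>)*(t2-t1) \<le> C u t2 - C u t1" using clock_mono[OF cu _ True] d by auto
    have "2*L*(1-\<delta>) < (1+\<delta>)*(t2-t1)*(1-\<delta>)" using a wd d by (intro mult_strict_right_mono) auto
    also have "\<dots> = (1+\<delta>)*((1-\<delta>)*(t2-t1))" by simp
    also have "\<dots> \<le> (1+\<delta>) * L" using b ud d by (intro mult_left_mono) auto
    finally have "2*L*(1-\<delta>) < (1+\<delta>) * L" .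
    moreover have "L*(1-3*\<delta>) \<ge> 0" using d L by (intro mult_nonneg_nonneg) auto
    ultimately show False by (simp add: algebra_simps)
  next
    case False
    hence "t2 \<le> t1" by simp
    from clock_mono[OF cw _ this] d have "(1-\<delta>)*(t1-t2) \<le> C w t1 - C w t2" by auto
    moreover have "(1-\<delta>)*(t1-t2) \<ge> 0" using d \<open>t2 \<le> t1\<close> by auto
    ultimately show False using wd L by linarith
  qed
qed

lemma overlap_card:
  assumes cw: "valid_clock \<delta> (C w)" and cu: "valid_clock \<delta> (C u)"
    and d: "\<delta> \<le> 1/7" "0 \<le> \<delta>" and L: "L > 0"
  shows "finite (overlap C s L u g w) \<and> card (overlap C s L u g w) \<le> 3"
proof (cases "overlap C s L u g w = {}")
  case True then show ?thesis by simp
next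
  case False
  then obtain k0 where k0: "k0 \<in> overlap C s L u g w" by auto
  have fin: "finite (overlap C s L u g w)"
    by (rule finite_subset[of _ "{..k0+2}"]) (auto dest: overlap_close[OF cw cu d L k0])
  define m where "m = Min (overlap C s L u g w)"
  have mi: "m \<in> overlap C s L u g w" using fin False unfolding m_def by simp
  have "overlap C s L u g w \<subseteq> {m..m+2}"
    using fin overlap_close[OF cw cu d L mi] unfolding m_def by auto
  hence "card (overlap C s L u g w) \<le> card {m..m+2}" by (rule card_mono[rotated]) simp
  thus ?thesis using fin by simp
qed



lemma pmf_frame:
  assumes "finite (A w)" "A w \<noteq> {}" "c \<in> A w" "Dest > 0"
  shows "pmf (frame_pmf A Dest w) (b,c) =
           (if b then p_tx A Dest w else 1 - p_tx A Dest w) / real (card (A w))"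
proof -
  have p: "0 \<le> p_tx A Dest w" "p_tx A Dest w \<le> 1" using assms unfolding p_tx_def by auto
  show ?thesis unfolding frame_pmf_def pmf_pair using assms p
    by (cases b) (auto simp: pmf_of_set)
qed


theorem mainTheorem2:
  fixes nb :: "'n::finite \<Rightarrow> 'n \<Rightarrow> bool" and A :: "'n \<Rightarrow> 'c set"
    and Dest :: nat and C :: "'n \<Rightarrow> real \<Rightarrow> real" and s :: "'n \<Rightarrow> real"
    and L \<delta> :: real and v u :: 'n and f g :: nat
  assumes sym: "\<forall>x y. nb x y \<longleftrightarrow> nb y x"
    and irrefl: "\<forall>x. \<not> nb x x"
    and chans: "\<forall>x. finite (A x) \<and> A x \<noteq> {}"
    and Dest_pos: "Dest > 0"
    and Dest_ge: "maxdeg nb A \<le> Dest"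
    and delta: "\<delta> \<le> 1/7"
    and clocks: "\<forall>x. valid_clock \<delta> (C x)"
    and L_pos: "L > 0"
    and link: "nb v u"
    and al: "aligned C s L v f u g"
  shows "measure (alg_space A Dest) {\<omega> \<in> space (alg_space A Dest). covers nb A C s L \<omega> v f u g}
           \<ge> rho nb A / (8 * max (2 * real (S_max A)) (3 * real Dest))"
proof -
  have vu: "v \<noteq> u" using link irrefl by auto
  have d0: "0 \<le> \<delta>"
  proof -
    have "(1 - \<delta>) \<le> C v 1 - C v 0 \<and> C v 1 - C v 0 \<le> (1 + \<delta>)"
      using spec[OF clocks, of v] unfolding valid_clock_def by (metis add_0 mult_1_right zero_le_one)
    thus ?thesis by linarith
  qed
  define M where "M = (\<lambda>i::'n\<times>nat. measure_pmf (frame_pmf A Dest (fst i)))"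
  interpret P: product_prob_space M "UNIV::('n\<times>nat) set"
    unfolding M_def by (intro product_prob_spaceI measure_pmf.prob_space_axioms)
  have sp: "alg_space A Dest = PiM UNIV M" unfolding alg_space_def M_def by simp
  define W where "W (c::'c) = {w. w \<noteq> v \<and> nb_on nb A u w c}" for c
  define K where "K (c::'c) = Sigma (W c) (\<lambda>w. overlap C s L u g w)" for c
  define J where "J (c::'c) = insert (v,f) (insert (u,g) (K c))" for c
  define X where "X (c::'c) i = (if i = (v,f) then {(True,c)} else if i = (u,g) then {(False,c)} else -{(True,c)})" for c i
  define E where "E (c::'c) = {\<omega> \<in> space (PiM UNIV M). \<forall>i\<in>J c. \<omega> i \<in> X c i}" for c
  have ov: "finite (overlap C s L u g w) \<and> card (overlap C s L u g w) \<le> 3" for w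
    using overlap_card[of \<delta> C w u L s g] clocks delta d0 L_pos by auto
  have finK: "finite (K c)" for c unfolding K_def using ov by auto
  have finJ: "finite (J c)" for c unfolding J_def using finK by auto
  have notK: "(v,f) \<notin> K c" "(u,g) \<notin> K c" for c
    unfolding K_def W_def nb_on_def using irrefl by auto
  have cov_iff: "covers_on nb A C s L \<omega> v f u g c \<longleftrightarrow> (\<forall>i\<in>J c. \<omega> i \<in> X c i)" for \<omega> c
    unfolding covers_on_def J_def using vu irrefl
    by (auto simp: X_def K_def W_def nb_on_def) (metis irrefl)
  have Eemb: "E c = prod_emb UNIV M (J c) (PiE (J c) (X c))" for c
    unfolding E_def prod_emb_def by (auto simp: space_PiM Pi_iff)
  have Esets: "E c \<in> sets (PiM UNIV M)" for c
    unfolding Eemb by (rule sets_PiM_I) (auto simp: finJ M_def)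
  have Emeas: "measure (PiM UNIV M) (E c) = (\<Prod>i\<in>J c. measure (M i) (X c i))" for c
    unfolding Eemb by (rule P.measure_PiM_emb) (auto simp: finJ M_def)
  have seteq: "{\<omega> \<in> space (alg_space A Dest). covers nb A C s L \<omega> v f u g} = (\<Union>c\<in>A u \<inter> A v. E c)"
    unfolding sp covers_def cov_iff E_def by auto
  have disj: "disjoint_family_on E (A u \<inter> A v)"
    unfolding disjoint_family_on_def E_def J_def X_def using vu by auto
  define Mx where "Mx = max (2 * real (S_max A)) (3 * real Dest)"
  have meq: "measure (alg_space A Dest) {\<omega> \<in> space (alg_space A Dest). covers nb A C s L \<omega> v f u g}
        = (\<Sum>c\<in>A u \<inter> A v. measure (PiM UNIV M) (E c))"
    unfolding seteq unfolding sp
    by (rule P.finite_measure_finite_Union) (use chans Esets disj in auto)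
  have fa: "finite (A x)" "A x \<noteq> {}" for x using chans by auto
  have apos: "real (card (A x)) > 0" for x using fa[of x] by (simp add: card_gt_0_iff)
  have Dp: "real Dest > 0" using Dest_pos by simp
  have p01: "0 \<le> p_tx A Dest x" "p_tx A Dest x \<le> 1/2" for x
    unfolding p_tx_def using Dest_pos by auto
  have aS: "real (card (A x)) \<le> real (S_max A)" for x
    unfolding S_max_def by (simp add: Max_ge)
  have Mxpos: "Mx > 0" unfolding Mx_def using Dp by simp
  have finD: "finite {deg nb A x c |x c. c \<in> A x}"
    by (rule finite_subset[of _ "(\<lambda>(x,y). deg nb A x y) ` (SIGMA x:UNIV. A x)"])
       (use fa in auto)
  have degle: "c \<in> A x \<Longrightarrow> deg nb A x c \<le> Dest" for x c
  proof -
    assume "c \<in> A x"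
    hence "deg nb A x c \<in> {deg nb A x c |x c. c \<in> A x}" by blast
    hence "deg nb A x c \<le> maxdeg nb A" unfolding maxdeg_def using finD by simp
    thus ?thesis using Dest_ge by simp
  qed
  have cardW: "card (W c) \<le> Dest - 1" if c: "c \<in> A u \<inter> A v" for c
  proof -
    have "W c = {w. nb_on nb A u w c} - {v}" unfolding W_def by auto
    moreover have "v \<in> {w. nb_on nb A u w c}" using c link sym unfolding nb_on_def by auto
    ultimately have "card (W c) = deg nb A u c - 1" unfolding deg_def by simp
    thus ?thesis using degle[of c u] c by simp
  qed
  have cardK: "card (K c) \<le> 3 * (Dest - 1)" if c: "c \<in> A u \<inter> A v" for c
  proof -
    have "card (K c) = (\<Sum>w\<in>W c. card (overlap C s L u g w))"
      unfolding K_def by (rule card_SigmaI) (use ov in auto)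
    also have "\<dots> \<le> (\<Sum>w\<in>W c. 3)" by (rule sum_mono) (use ov in auto)
    also have "\<dots> = 3 * card (W c)" by simp
    also have "\<dots> \<le> 3 * (Dest - 1)" using cardW[OF c] by simp
    finally show ?thesis .
  qed
  have bound: "measure (PiM UNIV M) (E c) \<ge> 1 / Mx * (1 / (2 * real (card (A u)))) * (1/4)"
    if c: "c \<in> A u \<inter> A v" for c
  proof -
    have cK: "c \<in> A (fst i)" if "i \<in> K c" for i using that unfolding K_def W_def nb_on_def by auto
    have m1: "measure (M (v,f)) (X c (v,f)) = p_tx A Dest v / real (card (A v))"
      using c fa Dest_pos by (simp add: M_def X_def measure_pmf_single pmf_frame)
    have m2: "measure (M (u,g)) (X c (u,g)) = (1 - p_tx A Dest u) / real (card (A u))"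
      using c fa Dest_pos vu by (simp add: M_def X_def measure_pmf_single pmf_frame)
    have m3: "measure (M i) (X c i) = 1 - p_tx A Dest (fst i) / real (card (A (fst i)))"
      if i: "i \<in> K c" for i
    proof -
      have ne: "i \<noteq> (v,f)" "i \<noteq> (u,g)" using notK i by auto
      have "measure (M i) (X c i) = measure (measure_pmf (frame_pmf A Dest (fst i))) (space (measure_pmf (frame_pmf A Dest (fst i))) - {(True,c)})"
        using ne by (simp add: M_def X_def Compl_eq_Diff_UNIV)
      also have "\<dots> = 1 - pmf (frame_pmf A Dest (fst i)) (True,c)"
        by (subst measure_pmf.prob_compl) (auto simp: measure_pmf_single)
      finally show ?thesis using cK[OF i] fa Dest_pos by (simp add: pmf_frame)
    qed
    have "measure (PiM UNIV M) (E c) = measure (M (v,f)) (X c (v,f)) * (measure (M (u,g)) (X c (u,g)) *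
            (\<Prod>i\<in>K c. measure (M i) (X c i)))"
      unfolding Emeas J_def using finK notK vu by (simp add: prod.insert)
    also have "\<dots> = p_tx A Dest v / real (card (A v)) * ((1 - p_tx A Dest u) / real (card (A u)) *
            (\<Prod>i\<in>K c. 1 - p_tx A Dest (fst i) / real (card (A (fst i)))))"
      using m1 m2 m3 by simp
    finally have eq: "measure (PiM UNIV M) (E c) = p_tx A Dest v / real (card (A v)) * ((1 - p_tx A Dest u) / real (card (A u)) *
            (\<Prod>i\<in>K c. 1 - p_tx A Dest (fst i) / real (card (A (fst i)))))" .
    define q where "q = 1 - 1 / (3 * real Dest)"
    have q01: "0 \<le> q" "q \<le> 1" unfolding q_def using Dest_pos by (auto simp: field_simps)
    have fq: "q \<le> 1 - p_tx A Dest x / real (card (A x))" for x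
    proof -
      have "p_tx A Dest x \<le> real (card (A x)) / (3 * real Dest)" unfolding p_tx_def by simp
      hence "p_tx A Dest x / real (card (A x)) \<le> real (card (A x)) / (3 * real Dest) / real (card (A x))"
        using apos[of x] by (intro divide_right_mono) auto
      also have "\<dots> = 1 / (3 * real Dest)" using apos[of x] by simp
      finally show ?thesis unfolding q_def by simp
    qed
    have b3: "(\<Prod>i\<in>K c. 1 - p_tx A Dest (fst i) / real (card (A (fst i)))) \<ge> 1/4"
    proof -
      have "(1::real)/4 \<le> q ^ (3 * (Dest - 1))" unfolding q_def by (rule quarter_bound[OF Dest_pos])
      also have "\<dots> \<le> q ^ card (K c)" by (rule power_decreasing[OF cardK[OF c] q01])
      also have "\<dots> = (\<Prod>i\<in>K c. q)" by simp
      also have "\<dots> \<le> (\<Prod>i\<in>K c. 1 - p_tx A Dest (fst i) / real (card (A (fst i))))"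
        by (rule prod_mono) (use q01 fq in auto)
      finally show ?thesis .
    qed
    have b2: "(1 - p_tx A Dest u) / real (card (A u)) \<ge> 1 / (2 * real (card (A u)))"
      using p01[of u] apos[of u] by (simp add: field_simps)
    have b1: "p_tx A Dest v / real (card (A v)) \<ge> 1 / Mx"
    proof (cases "1/2 \<le> real (card (A v)) / (3 * real Dest)")
      case True
      hence "p_tx A Dest v / real (card (A v)) = 1 / (2 * real (card (A v)))"
        unfolding p_tx_def by simp
      moreover have "2 * real (card (A v)) \<le> Mx" using aS[of v] unfolding Mx_def by simp
      ultimately show ?thesis using apos[of v] by (simp add: frac_le)
    next
      case False
      hence "p_tx A Dest v / real (card (A v)) = 1 / (3 * real Dest)"
        unfolding p_tx_def using apos[of v] by simp
      moreover have "3 * real Dest \<le> Mx" unfolding Mx_def by simp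
      ultimately show ?thesis using Dp by (simp add: frac_le)
    qed
    have "1 / Mx * (1 / (2 * real (card (A u)))) * (1/4) \<le>
          p_tx A Dest v / real (card (A v)) * ((1 - p_tx A Dest u) / real (card (A u)) *
            (\<Prod>i\<in>K c. 1 - p_tx A Dest (fst i) / real (card (A (fst i)))))"
      unfolding mult.assoc
      by (intro mult_mono b1 b2 b3) (use Mxpos apos p01[of u] p01[of v] in \<open>auto intro!: divide_nonneg_pos\<close>)
    thus ?thesis using eq by simp
  qed
  have smono: "(\<Sum>c\<in>A u \<inter> A v. measure (PiM UNIV M) (E c)) \<ge> (\<Sum>c\<in>A u \<inter> A v. 1 / Mx * (1 / (2 * real (card (A u)))) * (1/4))"
    by (rule sum_mono) (rule bound)
  have finR: "finite {span_ratio A x y |x y. nb x y}"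
    by (rule finite_subset[of _ "(\<lambda>(x,y). span_ratio A x y) ` UNIV"]) auto
  have rle: "rho nb A \<le> span_ratio A v u"
    unfolding rho_def by (rule Min_le[OF finR]) (use link in auto)
  have sr: "(\<Sum>c\<in>A u \<inter> A v. 1 / Mx * (1 / (2 * real (card (A u)))) * (1/4)) = span_ratio A v u / (8 * Mx)"
    unfolding span_ratio_def using apos[of u] Mxpos by (simp add: field_simps)
  have "rho nb A / (8 * Mx) \<le> span_ratio A v u / (8 * Mx)"
    using rle Mxpos by (simp add: divide_right_mono)
  thus ?thesis using meq smono sr unfolding Mx_def by linarith
qed

end
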